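(* Let $n\ge1$, $1\le k\le n$, $l\ge1$, $k'=n+1-k$, $d=kk'$, and regard $B=B(l\bar\Lambda_k)$ as the set of semistandard tableaux $(m_{i,i'})_{1\le i\le k,1\le i'\le l}$ with entries in $\{1,\dots,n+1\}$, $m_{i,i'}\le m_{i,i'+1}$, $m_{i,i'}<m_{i+1,i'}$, with its $U_q(A_n)$-crystal structure. For $1\le a\le d$ put $g=\lfloor(a-1)/k'\rfloor$, $r=a-1-k'g$ and $i_a=k-g+r\in\{1,\dots,n\}$. Let $B_0=\{\overline b\}$ where $\overline b$ is the tableau with $m_{i,i'}=i$, $B_a=\bigcup_{n\ge0}\tilde f_{i_a}^nB_{a-1}\setminus\{0\}$, $b_0=\overline b$ and $b_a=\tilde f_{i_a}^{\varphi_{i_a}(b_{a-1})}b_{a-1}$. Then for each $1\le a\le d$: (1) $B_a=\{(m_{i,i'})\in B: m_{i,i'}=i \text{ for all } i<k-g \text{ and all } i',\ m_{k-g,i'}\le k-g+r+1\text{ for all }i'\}$; (2) $b_a$ is the tableau with $m_{i,i'}=i$ for $i<k-g$, $m_{k-g,i'}=k-g+r+1$, and $m_{i,i'}=i+k'$ for $i>k-g$.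
   Context: The crystal structure on $B(l\bar\Lambda_k)$: for a single column ($l=1$), $\tilde e_j$ (resp. $\tilde f_j$) changes an entry $j+1$ to $j$ (resp. $j$ to $j+1$), giving $0$ if there is no such entry or the result is not strictly increasing; for general $l$, $B(l\bar\Lambda_k)$ is embedded in $B(\bar\Lambda_k)^{\otimes l}$ by sending a tableau to (column $l$)$\otimes\cdots\otimes$(column $1$), and the operators are the restrictions of those on the tensor product (Kashiwara's tensor product / signature rule). $\varphi_j(b)=\max\{n:\tilde f_j^nb\neq0\}$. (In the paper these $B_a,b_a$ are the sets $B^{(n+1)}_a$ and elements $b^{(n+1)}_a$ for the perfect crystal $B^{k,l}$ of type $A^{(1)}_n$ at $j=n+1$, where $i^{(n+1)}_a\equiv k-g+r$.) *)

theory Defs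
  imports Main
begin

section \<open>Partial operators (0 of the crystal modelled by None)\<close>

fun opow :: "('a \<Rightarrow> 'a option) \<Rightarrow> nat \<Rightarrow> 'a \<Rightarrow> 'a option" where
  "opow f 0 b = Some b"
| "opow f (Suc n) b = Option.bind (opow f n b) f"

definition strf :: "('a \<Rightarrow> 'a option) \<Rightarrow> 'a \<Rightarrow> nat" where
  "strf f b = (GREATEST n. opow f n b \<noteq> None)"

section \<open>Single column crystal B(Lambda_k): a column is the list of its entries, top to bottom\<close>

definition col_f :: "nat \<Rightarrow> nat list \<Rightarrow> nat list option" where
  "col_f j c = (if j \<in> set c \<and> sorted_wrt (<) (map (\<lambda>x. if x = j then j + 1 else x) c)
                then Some (map (\<lambda>x. if x = j then j + 1 else x) c) else None)"

definition col_e :: "nat \<Rightarrow> nat list \<Rightarrow> nat list option" where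
  "col_e j c = (if j + 1 \<in> set c \<and> sorted_wrt (<) (map (\<lambda>x. if x = j + 1 then j else x) c)
                then Some (map (\<lambda>x. if x = j + 1 then j else x) c) else None)"

section \<open>Tensor powers, Kashiwara's tensor product rule;
  the list [c1, c2, ..., cN] stands for c1 \<otimes> (c2 \<otimes> (... \<otimes> cN))\<close>

text \<open>(phi, epsilon) of a tensor product:
  phi(b1 \<otimes> b2) = phi(b2) + max(0, phi(b1) - eps(b2)),
  eps(b1 \<otimes> b2) = eps(b1) + max(0, eps(b2) - phi(b1)).\<close>
fun tstr :: "nat \<Rightarrow> nat list list \<Rightarrow> nat \<times> nat" where
  "tstr j [] = (0, 0)"
| "tstr j (c # cs) =
     (let p1 = strf (col_f j) c; e1 = strf (col_e j) c; (p2, e2) = tstr j cs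
      in (p2 + (p1 - e2), e1 + (e2 - p1)))"

fun tf :: "nat \<Rightarrow> nat list list \<Rightarrow> nat list list option" where
  "tf j [] = None"
| "tf j (c # cs) =
     (if strf (col_f j) c > snd (tstr j cs)
      then map_option (\<lambda>c'. c' # cs) (col_f j c)
      else map_option (\<lambda>cs'. c # cs') (tf j cs))"

section \<open>Tableaux of shape k x l: m i i' for 1 \<le> i \<le> k, 1 \<le> i' \<le> l, value 0 elsewhere\<close>

type_synonym tableau = "nat \<Rightarrow> nat \<Rightarrow> nat"

definition SSYT :: "nat \<Rightarrow> nat \<Rightarrow> nat \<Rightarrow> tableau set" where
  "SSYT n k l = {m. (\<forall>i i'. 1 \<le> i \<and> i \<le> k \<and> 1 \<le> i' \<and> i' \<le> l \<longrightarrow> 1 \<le> m i i' \<and> m i i' \<le> n + 1)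
     \<and> (\<forall>i i'. 1 \<le> i \<and> i \<le> k \<and> 1 \<le> i' \<and> i' < l \<longrightarrow> m i i' \<le> m i (i' + 1))
     \<and> (\<forall>i i'. 1 \<le> i \<and> i < k \<and> 1 \<le> i' \<and> i' \<le> l \<longrightarrow> m i i' < m (i + 1) i')
     \<and> (\<forall>i i'. \<not> (1 \<le> i \<and> i \<le> k \<and> 1 \<le> i' \<and> i' \<le> l) \<longrightarrow> m i i' = 0)}"

text \<open>tableau \<mapsto> (column l) \<otimes> ... \<otimes> (column 1)\<close>
definition tab_cols :: "nat \<Rightarrow> nat \<Rightarrow> tableau \<Rightarrow> nat list list" where
  "tab_cols k l m = map (\<lambda>i'. map (\<lambda>i. m i i') [1..<k+1]) (rev [1..<l+1])"

definition cols_tab :: "nat \<Rightarrow> nat \<Rightarrow> nat list list \<Rightarrow> tableau" where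
  "cols_tab k l cs = (\<lambda>i i'. if 1 \<le> i \<and> i \<le> k \<and> 1 \<le> i' \<and> i' \<le> l
                            then cs ! (l - i') ! (i - 1) else 0)"

definition tab_f :: "nat \<Rightarrow> nat \<Rightarrow> nat \<Rightarrow> tableau \<Rightarrow> tableau option" where
  "tab_f k l j m = map_option (cols_tab k l) (tf j (tab_cols k l m))"

definition bbar :: "nat \<Rightarrow> nat \<Rightarrow> tableau" where
  "bbar k l = (\<lambda>i i'. if 1 \<le> i \<and> i \<le> k \<and> 1 \<le> i' \<and> i' \<le> l then i else 0)"

definition idx :: "nat \<Rightarrow> nat \<Rightarrow> nat \<Rightarrow> nat" where
  "idx n k a = k - (a - 1) div (n + 1 - k) + (a - 1) mod (n + 1 - k)"

fun Bset :: "nat \<Rightarrow> nat \<Rightarrow> nat \<Rightarrow> nat \<Rightarrow> tableau set" where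
  "Bset n k l 0 = {bbar k l}"
| "Bset n k l (Suc a) =
     {b'. \<exists>b \<in> Bset n k l a. \<exists>N. opow (tab_f k l (idx n k (Suc a))) N b = Some b'}"

fun bseq :: "nat \<Rightarrow> nat \<Rightarrow> nat \<Rightarrow> nat \<Rightarrow> tableau" where
  "bseq n k l 0 = bbar k l"
| "bseq n k l (Suc a) =
     (let f = tab_f k l (idx n k (Suc a))
      in the (opow f (strf f (bseq n k l a)) (bseq n k l a)))"

end

theory Submission
  imports Defs
begin

lemma opow_None_mono: "opow f n b = None \<Longrightarrow> n \<le> m \<Longrightarrow> opow f m b = None"
proof (induction m)
  case 0 then show ?case by simp
next
  case (Suc m) then show ?case by (cases "n = Suc m") (auto simp: le_Suc_eq)
qed

lemma strf_eq:
  assumes a1: "opow f N b \<noteq> None" and a2: "opow f (Suc N) b = None"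
  shows "strf f b = N"
  unfolding strf_def
proof (rule Greatest_equality)
  show "opow f N b \<noteq> None" by (fact a1)
  fix y assume y: "opow f y b \<noteq> None"
  show "y \<le> N"
  proof (rule ccontr)
    assume "\<not> y \<le> N"
    then have "Suc N \<le> y" by simp
    from opow_None_mono[OF a2 this] y show False by simp
  qed
qed

definition fm :: "nat \<Rightarrow> nat list \<Rightarrow> nat list" where
  "fm j c = map (\<lambda>x. if x = j then j + 1 else x) c"
definition em :: "nat \<Rightarrow> nat list \<Rightarrow> nat list" where
  "em j c = map (\<lambda>x. if x = j + 1 then j else x) c"

lemma col_f_alt: "col_f j c = (if j \<in> set c \<and> sorted_wrt (<) (fm j c) then Some (fm j c) else None)"
  by (simp add: col_f_def fm_def)
lemma col_e_alt: "col_e j c = (if Suc j \<in> set c \<and> sorted_wrt (<) (em j c) then Some (em j c) else None)"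
  by (simp add: col_e_def em_def)

lemma fm_sorted:
  assumes "sorted_wrt (<) c" "Suc j \<notin> set c"
  shows "sorted_wrt (<) (fm j c)"
  unfolding fm_def sorted_wrt_map
  by (rule sorted_wrt_mono_rel[OF _ assms(1)]) (use assms(2) in \<open>auto simp: less_Suc_eq; metis Suc_lessI\<close>)

lemma em_sorted:
  assumes "sorted_wrt (<) c" "j \<notin> set c"
  shows "sorted_wrt (<) (em j c)"
  unfolding em_def sorted_wrt_map
  by (rule sorted_wrt_mono_rel[OF _ assms(1)]) (use assms(2) in \<open>auto simp: less_Suc_eq; metis Suc_lessI\<close>)

lemma fm_not_sorted:
  assumes "j \<in> set c" "Suc j \<in> set c"
  shows "\<not> sorted_wrt (<) (fm j c)"
proof
  assume "sorted_wrt (<) (fm j c)"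
  then have "distinct (fm j c)" by (simp add: strict_sorted_iff)
  then have "inj_on (\<lambda>x. if x = j then j + 1 else x) (set c)" by (simp add: fm_def distinct_map)
  from inj_onD[OF this _ assms(1) assms(2)] show False by simp
qed

lemma em_not_sorted:
  assumes "j \<in> set c" "Suc j \<in> set c"
  shows "\<not> sorted_wrt (<) (em j c)"
proof
  assume "sorted_wrt (<) (em j c)"
  then have "distinct (em j c)" by (simp add: strict_sorted_iff)
  then have "inj_on (\<lambda>x. if x = j + 1 then j else x) (set c)" by (simp add: em_def distinct_map)
  from inj_onD[OF this _ assms(1) assms(2)] show False by simp
qed

lemma col_f_iff:
  assumes "sorted_wrt (<) c"
  shows "col_f j c = (if j \<in> set c \<and> Suc j \<notin> set c then Some (fm j c) else None)"
  using fm_sorted[OF assms] fm_not_sorted by (auto simp: col_f_alt)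

lemma col_e_iff:
  assumes "sorted_wrt (<) c"
  shows "col_e j c = (if Suc j \<in> set c \<and> j \<notin> set c then Some (em j c) else None)"
  using em_sorted[OF assms] em_not_sorted by (auto simp: col_e_alt)

lemma j_notin_fm: "j \<notin> set (fm j c)" by (auto simp: fm_def)
lemma Sj_notin_em: "Suc j \<notin> set (em j c)" by (auto simp: em_def)
lemma Sj_in_fm: "j \<in> set c \<Longrightarrow> Suc j \<in> set (fm j c)" by (force simp: fm_def)
lemma j_in_em: "Suc j \<in> set c \<Longrightarrow> j \<in> set (em j c)" by (force simp: em_def)
lemma length_fm[simp]: "length (fm j c) = length c" by (simp add: fm_def)
lemma length_em[simp]: "length (em j c) = length c" by (simp add: em_def)
lemma nth_fm: "q < length c \<Longrightarrow> fm j c ! q = (if c ! q = j then j + 1 else c ! q)" by (simp add: fm_def)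
lemma nth_em: "q < length c \<Longrightarrow> em j c ! q = (if c ! q = j + 1 then j else c ! q)" by (simp add: em_def)
lemma fm_em: "j \<notin> set c \<Longrightarrow> fm j (em j c) = c"
  unfolding fm_def em_def by (induction c) auto

definition phi :: "nat \<Rightarrow> nat list \<Rightarrow> nat" where
  "phi j c = (if j \<in> set c \<and> Suc j \<notin> set c then 1 else 0)"
definition eps :: "nat \<Rightarrow> nat list \<Rightarrow> nat" where
  "eps j c = (if Suc j \<in> set c \<and> j \<notin> set c then 1 else 0)"

lemma strf_col_f:
  assumes "sorted_wrt (<) c"
  shows "strf (col_f j) c = phi j c"
proof (cases "j \<in> set c \<and> Suc j \<notin> set c")
  case True
  have s: "sorted_wrt (<) (fm j c)" using fm_sorted[OF assms] True by auto
  show ?thesis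
  proof -
    have "strf (col_f j) c = 1"
      by (rule strf_eq) (use True col_f_iff[OF assms, of j] col_f_iff[OF s, of j] j_notin_fm[of j c] in auto)
    then show ?thesis using True by (simp add: phi_def)
  qed
next
  case False
  then show ?thesis using col_f_iff[OF assms, of j]
    by (auto simp: phi_def intro!: strf_eq[where N = 0])
qed

lemma strf_col_e:
  assumes "sorted_wrt (<) c"
  shows "strf (col_e j) c = eps j c"
proof (cases "Suc j \<in> set c \<and> j \<notin> set c")
  case True
  have s: "sorted_wrt (<) (em j c)" using em_sorted[OF assms] True by auto
  show ?thesis
  proof -
    have "strf (col_e j) c = 1"
      by (rule strf_eq) (use True col_e_iff[OF assms, of j] col_e_iff[OF s, of j] Sj_notin_em[of j c] in auto)
    then show ?thesis using True by (simp add: eps_def)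
  qed
next
  case False
  then show ?thesis using col_e_iff[OF assms, of j]
    by (auto simp: eps_def intro!: strf_eq[where N = 0])
qed

abbreviation TE :: "nat \<Rightarrow> nat list list \<Rightarrow> nat" where "TE j cs \<equiv> snd (tstr j cs)"
abbreviation TP :: "nat \<Rightarrow> nat list list \<Rightarrow> nat" where "TP j cs \<equiv> fst (tstr j cs)"

lemma tstr_Cons:
  "tstr j (c # cs) = (TP j cs + (strf (col_f j) c - TE j cs), strf (col_e j) c + (TE j cs - strf (col_f j) c))"
  by (simp add: Let_def split: prod.split)

declare tstr.simps(2)[simp del]

fun te :: "nat \<Rightarrow> nat list list \<Rightarrow> nat list list option" where
  "te j [] = None"
| "te j (c # cs) =
     (if strf (col_f j) c \<ge> snd (tstr j cs)
      then map_option (\<lambda>c'. c' # cs) (col_e j c)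
      else map_option (\<lambda>cs'. c # cs') (te j cs))"

definition colsorted :: "nat list list \<Rightarrow> bool" where
  "colsorted cs = (\<forall>c\<in>set cs. sorted_wrt (<) c)"

lemma colsorted_Cons[simp]: "colsorted (c # cs) = (sorted_wrt (<) c \<and> colsorted cs)"
  by (simp add: colsorted_def)

lemma te_tf:
  "colsorted cs \<Longrightarrow> te j cs = Some cs' \<Longrightarrow>
    tf j cs' = Some cs \<and> tstr j cs' = (TP j cs + 1, TE j cs - 1) \<and> colsorted cs'"
proof (induction cs arbitrary: cs')
  case Nil then show ?case by simp
next
  case (Cons c cs)
  have sc: "sorted_wrt (<) c" and scs: "colsorted cs" using Cons.prems by auto
  show ?case
  proof (cases "strf (col_f j) c \<ge> TE j cs")
    case True
    with Cons.prems obtain c' where ce: "col_e j c = Some c'" and cs': "cs' = c' # cs" by auto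
    from ce have cond: "Suc j \<in> set c" "j \<notin> set c" and c': "c' = em j c"
      using col_e_iff[OF sc, of j] by (auto split: if_splits)
    have sc': "sorted_wrt (<) c'" using em_sorted[OF sc cond(2)] c' by simp
    have cf: "col_f j c' = Some c"
      using col_f_iff[OF sc', of j] c' j_in_em[OF cond(1)] Sj_notin_em[of j c] fm_em[OF cond(2)] by simp
    have ph: "strf (col_f j) c = 0" "strf (col_e j) c = 1" "strf (col_f j) c' = 1" "strf (col_e j) c' = 0"
      using strf_col_f[OF sc] strf_col_e[OF sc] strf_col_f[OF sc'] strf_col_e[OF sc'] cond c'
        j_in_em[OF cond(1)] Sj_notin_em[of j c]
      by (auto simp: phi_def eps_def)
    have "TE j cs = 0" using True ph by simp
    then show ?thesis using cs' cf ph sc' scs by (simp add: tstr_Cons)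
  next
    case False
    with Cons.prems obtain cs'' where te': "te j cs = Some cs''" and cs': "cs' = c # cs''" by auto
    from Cons.IH[OF scs te'] have ih: "tf j cs'' = Some cs" "tstr j cs'' = (TP j cs + 1, TE j cs - 1)"
      "colsorted cs''" by auto
    show ?thesis using False ih cs' sc by (auto simp: tstr_Cons)
  qed
qed

lemma te_exists:
  "colsorted cs \<Longrightarrow> TE j cs > 0 \<Longrightarrow> te j cs \<noteq> None"
proof (induction cs)
  case Nil then show ?case by simp
next
  case (Cons c cs)
  have sc: "sorted_wrt (<) c" and scs: "colsorted cs" using Cons.prems by auto
  show ?case
  proof (cases "strf (col_f j) c \<ge> TE j cs")
    case True
    then have "strf (col_e j) c > 0" using Cons.prems(2) by (simp add: tstr_Cons)
    then have "Suc j \<in> set c \<and> j \<notin> set c" using strf_col_e[OF sc] by (simp add: eps_def split: if_splits)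
    then show ?thesis using True col_e_iff[OF sc, of j] by simp
  next
    case False
    then have "TE j cs > 0" by simp
    from Cons.IH[OF scs this] False show ?thesis by auto
  qed
qed

lemma tf_pos:
  "tf j cs = Some cs' \<Longrightarrow> \<exists>i<length cs. col_f j (cs ! i) = Some (cs' ! i) \<and> cs' = cs[i := cs' ! i]
     \<and> TE j (drop (Suc i) cs) < strf (col_f j) (cs ! i)
     \<and> (\<forall>i'<i. strf (col_f j) (cs ! i') \<le> TE j (drop (Suc i') cs))"
proof (induction cs arbitrary: cs')
  case Nil then show ?case by simp
next
  case (Cons c cs)
  show ?case
  proof (cases "strf (col_f j) c > TE j cs")
    case True
    with Cons.prems obtain c' where "col_f j c = Some c'" "cs' = c' # cs" by auto
    then show ?thesis using True by (intro exI[of _ 0]) auto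
  next
    case False
    with Cons.prems obtain cs'' where tf': "tf j cs = Some cs''" and cs': "cs' = c # cs''" by auto
    from Cons.IH[OF tf'] obtain i where i: "i < length cs" "col_f j (cs ! i) = Some (cs'' ! i)"
      "cs'' = cs[i := cs'' ! i]" "TE j (drop (Suc i) cs) < strf (col_f j) (cs ! i)"
      "\<forall>i'<i. strf (col_f j) (cs ! i') \<le> TE j (drop (Suc i') cs)" by blast
    show ?thesis
    proof (intro exI[of _ "Suc i"] conjI allI impI)
      fix i' assume "i' < Suc i"
      then show "strf (col_f j) ((c # cs) ! i') \<le> TE j (drop (Suc i') (c # cs))"
        using i(5) False by (cases i') auto
    qed (use i cs' in auto)
  qed
qed

lemma te_pos:
  "te j cs = Some cs' \<Longrightarrow> \<exists>i<length cs. col_e j (cs ! i) = Some (cs' ! i) \<and> cs' = cs[i := cs' ! i]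
     \<and> TE j (drop (Suc i) cs) \<le> strf (col_f j) (cs ! i)"
proof (induction cs arbitrary: cs')
  case Nil then show ?case by simp
next
  case (Cons c cs)
  show ?case
  proof (cases "strf (col_f j) c \<ge> TE j cs")
    case True
    with Cons.prems obtain c' where "col_e j c = Some c'" "cs' = c' # cs" by auto
    then show ?thesis using True by (intro exI[of _ 0]) auto
  next
    case False
    with Cons.prems obtain cs'' where te': "te j cs = Some cs''" and cs': "cs' = c # cs''" by auto
    from Cons.IH[OF te'] obtain i where i: "i < length cs" "col_e j (cs ! i) = Some (cs'' ! i)"
      "cs'' = cs[i := cs'' ! i]" "TE j (drop (Suc i) cs) \<le> strf (col_f j) (cs ! i)" by blast
    show ?thesis
      by (intro exI[of _ "Suc i"]) (use i cs' in auto)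
  qed
qed

definition wf :: "nat \<Rightarrow> nat \<Rightarrow> nat \<Rightarrow> nat list list \<Rightarrow> bool" where
  "wf n k l cs = (length cs = l
     \<and> (\<forall>t<l. length (cs ! t) = k \<and> sorted_wrt (<) (cs ! t) \<and> (\<forall>q<k. 1 \<le> cs ! t ! q \<and> cs ! t ! q \<le> n + 1))
     \<and> (\<forall>t q. Suc t < l \<longrightarrow> q < k \<longrightarrow> cs ! Suc t ! q \<le> cs ! t ! q))"

lemma wf_colsorted: "wf n k l cs \<Longrightarrow> colsorted cs"
  by (auto simp: wf_def colsorted_def in_set_conv_nth)

lemma sorted_nth_mono:
  assumes "sorted_wrt (<) (c :: nat list)" "q1 < length c" "q2 < length c" "c ! q1 < c ! q2"
  shows "q1 < q2"
proof (rule ccontr)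
  assume "\<not> q1 < q2"
  then have "q2 < q1 \<or> q2 = q1" by auto
  then show False
  proof
    assume "q2 < q1"
    from sorted_wrt_nth_less[OF assms(1) this assms(2)] assms(4) show False by (simp add: less_not_sym)
  qed (use assms in simp)
qed

lemma tf_wf:
  assumes w: "wf n k l cs" and j: "j \<le> n" and tf: "tf j cs = Some cs'"
  shows "wf n k l cs'"
proof -
  have cs: "colsorted cs" by (rule wf_colsorted[OF w])
  from tf_pos[OF tf] obtain i where i: "i < length cs" "col_f j (cs ! i) = Some (cs' ! i)"
    "cs' = cs[i := cs' ! i]" "TE j (drop (Suc i) cs) < strf (col_f j) (cs ! i)"
    "\<forall>i'<i. strf (col_f j) (cs ! i') \<le> TE j (drop (Suc i') cs)" by blast
  define v where "v = cs ! i"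
  have len: "length cs = l" using w by (simp add: wf_def)
  have sv: "sorted_wrt (<) v" using w i(1) len by (simp add: wf_def v_def)
  have lv: "length v = k" using w i(1) len by (simp add: wf_def v_def)
  have cond: "j \<in> set v" "Suc j \<notin> set v" and c': "cs' ! i = fm j v"
    using i(2) col_f_iff[OF sv, of j] by (auto simp: v_def split: if_splits)
  have sc': "sorted_wrt (<) (fm j v)" using fm_sorted[OF sv cond(2)] .
  have cs': "cs' = cs[i := fm j v]" using i(3) c' by simp
  have rows: "cs' ! Suc t ! q \<le> cs' ! t ! q" if t: "Suc t < l" and q: "q < k" for t q
  proof -
    have r0: "cs ! Suc t ! q \<le> cs ! t ! q" using w t q by (simp add: wf_def)
    consider "t = i" | "Suc t = i" | "t \<noteq> i" "Suc t \<noteq> i" by blast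
    then show ?thesis
    proof cases
      case 1
      then show ?thesis using cs' r0 t q lv len by (auto simp: nth_fm v_def)
    next
      case 2
      show ?thesis
      proof (cases "v ! q = j")
        case False
        then show ?thesis using cs' r0 t q lv len 2 by (auto simp: nth_fm v_def)
      next
        case True
        define u where "u = cs ! t"
        have su: "sorted_wrt (<) u" and lu: "length u = k" using w t by (auto simp: wf_def u_def)
        have uv: "\<And>q. q < k \<Longrightarrow> v ! q \<le> u ! q" using w t 2 by (auto simp: wf_def u_def v_def)
        have "u ! q \<noteq> j"
        proof
          assume uq: "u ! q = j"
          have "Suc j \<notin> set u"
          proof
            assume "Suc j \<in> set u"
            then obtain q2 where q2: "q2 < k" "u ! q2 = Suc j" using lu by (auto simp: in_set_conv_nth)
            have "q < q2" using sorted_nth_mono[OF su, of q q2] q q2 uq lu by simp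
            then have "v ! q < v ! q2" using sorted_wrt_nth_less[OF sv] q2 lv by simp
            then have "v ! q2 = Suc j" using uv[OF q2(1)] q2 True by simp
            then show False using cond(2) q2 lv by (metis nth_mem)
          qed
          moreover have "j \<in> set u" using uq q lu by (metis nth_mem)
          ultimately have "strf (col_f j) u = 1" using strf_col_f[OF su] by (simp add: phi_def)
          moreover have "strf (col_f j) u \<le> TE j (drop i cs)" using i(5) 2 by (auto simp: u_def)
          moreover have "TE j (drop i cs) = 0"
          proof -
            have "drop i cs = v # drop (Suc i) cs" using i(1) by (simp add: v_def Cons_nth_drop_Suc)
            moreover have "strf (col_e j) v = 0" using strf_col_e[OF sv] cond by (simp add: eps_def)
            ultimately show ?thesis using i(4) by (simp add: tstr_Cons v_def)
          qed
          ultimately show False by simp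
        qed
        moreover have "j \<le> u ! q" using uv[OF q] True by simp
        ultimately show ?thesis using cs' t q lv len 2 True by (auto simp: nth_fm v_def u_def)
      qed
    next
      case 3
      then show ?thesis using cs' r0 by simp
    qed
  qed
  have cols: "length (cs' ! t) = k \<and> sorted_wrt (<) (cs' ! t) \<and> (\<forall>q<k. 1 \<le> cs' ! t ! q \<and> cs' ! t ! q \<le> n + 1)"
    if t: "t < l" for t
  proof (cases "t = i")
    case True
    have "\<forall>q<k. 1 \<le> v ! q \<and> v ! q \<le> n + 1" using w t True by (simp add: wf_def v_def)
    then show ?thesis using True cs' lv sc' len t j by (auto simp: nth_fm)
  next
    case False
    then show ?thesis using w t cs' by (simp add: wf_def)
  qed
  show ?thesis using rows cols cs' len by (simp add: wf_def)
qed

lemma te_wf: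
  assumes w: "wf n k l cs" and j: "1 \<le> j" and te: "te j cs = Some cs'"
  shows "wf n k l cs'"
proof -
  have cs: "colsorted cs" by (rule wf_colsorted[OF w])
  from te_pos[OF te] obtain i where i: "i < length cs" "col_e j (cs ! i) = Some (cs' ! i)"
    "cs' = cs[i := cs' ! i]" "TE j (drop (Suc i) cs) \<le> strf (col_f j) (cs ! i)" by blast
  define v where "v = cs ! i"
  have len: "length cs = l" using w by (simp add: wf_def)
  have sv: "sorted_wrt (<) v" using w i(1) len by (simp add: wf_def v_def)
  have lv: "length v = k" using w i(1) len by (simp add: wf_def v_def)
  have cond: "Suc j \<in> set v" "j \<notin> set v" and c': "cs' ! i = em j v"
    using i(2) col_e_iff[OF sv, of j] by (auto simp: v_def split: if_splits)
  have sc': "sorted_wrt (<) (em j v)" using em_sorted[OF sv cond(2)] .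
  have cs': "cs' = cs[i := em j v]" using i(3) c' by simp
  have rows: "cs' ! Suc t ! q \<le> cs' ! t ! q" if t: "Suc t < l" and q: "q < k" for t q
  proof -
    have r0: "cs ! Suc t ! q \<le> cs ! t ! q" using w t q by (simp add: wf_def)
    consider "Suc t = i" | "t = i" | "t \<noteq> i" "Suc t \<noteq> i" by blast
    then show ?thesis
    proof cases
      case 1
      then show ?thesis using cs' r0 t q lv len by (auto simp: nth_em v_def)
    next
      case 2
      show ?thesis
      proof (cases "v ! q = Suc j")
        case False
        then show ?thesis using cs' r0 t q lv len 2 by (auto simp: nth_em v_def)
      next
        case True
        define u where "u = cs ! Suc t"
        have su: "sorted_wrt (<) u" and lu: "length u = k" using w t by (auto simp: wf_def u_def)
        have uv: "\<And>q. q < k \<Longrightarrow> u ! q \<le> v ! q" using w t 2 by (auto simp: wf_def u_def v_def)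
        have "u ! q \<noteq> Suc j"
        proof
          assume uq: "u ! q = Suc j"
          have "j \<notin> set u"
          proof
            assume "j \<in> set u"
            then obtain q2 where q2: "q2 < k" "u ! q2 = j" using lu by (auto simp: in_set_conv_nth)
            have "q2 < q" using sorted_nth_mono[OF su, of q2 q] q q2 uq lu by simp
            then have "v ! q2 < v ! q" using sorted_wrt_nth_less[OF sv] q lv by simp
            then have "v ! q2 = j" using uv[OF q2(1)] q2 True by simp
            then show False using cond(2) q2 lv by (metis nth_mem)
          qed
          moreover have "Suc j \<in> set u" using uq q lu by (metis nth_mem)
          ultimately have "strf (col_e j) u = 1" using strf_col_e[OF su] by (simp add: eps_def)
          moreover have "strf (col_f j) v = 0" using strf_col_f[OF sv] cond by (simp add: phi_def)
          moreover have "drop (Suc i) cs = u # drop (Suc (Suc i)) cs" using t 2 len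
            by (simp add: u_def Cons_nth_drop_Suc)
          ultimately show False using i(4) by (simp add: tstr_Cons v_def)
        qed
        moreover have "u ! q \<le> Suc j" using uv[OF q] True by simp
        ultimately show ?thesis using cs' t q lv len 2 True by (auto simp: nth_em v_def u_def)
      qed
    next
      case 3
      then show ?thesis using cs' r0 by simp
    qed
  qed
  have cols: "length (cs' ! t) = k \<and> sorted_wrt (<) (cs' ! t) \<and> (\<forall>q<k. 1 \<le> cs' ! t ! q \<and> cs' ! t ! q \<le> n + 1)"
    if t: "t < l" for t
  proof (cases "t = i")
    case True
    have "\<forall>q<k. 1 \<le> v ! q \<and> v ! q \<le> n + 1" using w t True by (simp add: wf_def v_def)
    then show ?thesis using True cs' lv sc' len t j by (auto simp: nth_em)
  next
    case False
    then show ?thesis using w t cs' by (simp add: wf_def)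
  qed
  show ?thesis using rows cols cs' len by (simp add: wf_def)
qed

definition Tset :: "nat \<Rightarrow> nat \<Rightarrow> nat \<Rightarrow> nat \<Rightarrow> nat \<Rightarrow> nat list list set" where
  "Tset n k l p v = {cs. wf n k l cs \<and> (\<forall>t<l. (\<forall>q. Suc q < p \<longrightarrow> cs ! t ! q = Suc q) \<and> cs ! t ! (p - 1) \<le> v)}"

lemma tf_Tset:
  assumes cs: "cs \<in> Tset n k l p (Suc j)" and tf: "tf j cs = Some cs'"
    and p: "1 \<le> p" "p \<le> k" "p \<le> j" "j \<le> n"
  shows "cs' \<in> Tset n k l p (Suc j)"
proof -
  have w: "wf n k l cs" using cs by (simp add: Tset_def)
  have w': "wf n k l cs'" using tf_wf[OF w p(4) tf] .
  from tf_pos[OF tf] obtain i where i: "i < length cs" "col_f j (cs ! i) = Some (cs' ! i)"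
    "cs' = cs[i := cs' ! i]" by blast
  have len: "length cs = l" using w by (simp add: wf_def)
  have sv: "sorted_wrt (<) (cs ! i)" and lv: "length (cs ! i) = k" using w i(1) len by (auto simp: wf_def)
  have c': "cs' ! i = fm j (cs ! i)"
    using i(2) col_f_iff[OF sv, of j] by (auto split: if_splits)
  have cs': "cs' = cs[i := fm j (cs ! i)]" using i(3) c' by simp
  have "\<forall>t<l. (\<forall>q. Suc q < p \<longrightarrow> cs' ! t ! q = Suc q) \<and> cs' ! t ! (p - 1) \<le> Suc j"
  proof (intro allI impI conjI)
    fix t q assume t: "t < l" and q: "Suc q < p"
    have "cs ! t ! q = Suc q" using cs t q by (simp add: Tset_def)
    then show "cs' ! t ! q = Suc q" using cs' t q p lv len by (cases "t = i") (auto simp: nth_fm)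
  next
    fix t assume t: "t < l"
    have "cs ! t ! (p - 1) \<le> Suc j" using cs t by (simp add: Tset_def)
    then show "cs' ! t ! (p - 1) \<le> Suc j" using cs' t p lv len by (cases "t = i") (auto simp: nth_fm)
  qed
  then show ?thesis using w' by (simp add: Tset_def)
qed

lemma Tset_mono: "v \<le> v' \<Longrightarrow> Tset n k l p v \<subseteq> Tset n k l p v'"
  by (force simp: Tset_def)

lemma opow_tf_Tset:
  assumes "cs0 \<in> Tset n k l p j" "opow (tf j) N cs0 = Some cs'"
    and p: "1 \<le> p" "p \<le> k" "p \<le> j" "j \<le> n"
  shows "cs' \<in> Tset n k l p (Suc j)"
  using assms(2)
proof (induction N arbitrary: cs')
  case 0 then show ?case using assms(1) Tset_mono[of j "Suc j" n k l p] by auto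
next
  case (Suc N)
  then obtain cs'' where "opow (tf j) N cs0 = Some cs''" "tf j cs'' = Some cs'"
    by (cases "opow (tf j) N cs0") auto
  then show ?case using Suc.IH tf_Tset p by blast
qed

definition mu :: "nat \<Rightarrow> nat list list \<Rightarrow> nat" where
  "mu j cs = length (filter (\<lambda>c. Suc j \<in> set c) cs)"

lemma te_mu: "colsorted cs \<Longrightarrow> te j cs = Some cs' \<Longrightarrow> mu j cs' < mu j cs"
proof (induction cs arbitrary: cs')
  case Nil then show ?case by simp
next
  case (Cons c cs)
  have sc: "sorted_wrt (<) c" and scs: "colsorted cs" using Cons.prems by auto
  show ?case
  proof (cases "strf (col_f j) c \<ge> TE j cs")
    case True
    with Cons.prems obtain c' where ce: "col_e j c = Some c'" and cs': "cs' = c' # cs" by auto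
    from ce have "Suc j \<in> set c" "c' = em j c"
      using col_e_iff[OF sc, of j] by (auto split: if_splits)
    then show ?thesis using cs' Sj_notin_em[of j c] by (simp add: mu_def)
  next
    case False
    with Cons.prems obtain cs'' where te': "te j cs = Some cs''" and cs': "cs' = c # cs''" by auto
    from Cons.IH[OF scs te'] show ?thesis using cs' by (simp add: mu_def)
  qed
qed

lemma wf_row0: "wf n k l cs \<Longrightarrow> t < l \<Longrightarrow> q < k \<Longrightarrow> cs ! t ! q \<le> cs ! 0 ! q"
proof (induction t)
  case 0 then show ?case by simp
next
  case (Suc t)
  then have "cs ! Suc t ! q \<le> cs ! t ! q" by (simp add: wf_def)
  with Suc show ?case by simp
qed

lemma te_Tset:
  assumes cs: "cs \<in> Tset n k l p (Suc j)" and te: "te j cs = Some cs'"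
    and p: "1 \<le> p" "p \<le> k" "p \<le> j" "1 \<le> j"
  shows "cs' \<in> Tset n k l p (Suc j)"
proof -
  have w: "wf n k l cs" using cs by (simp add: Tset_def)
  have w': "wf n k l cs'" using te_wf[OF w p(4) te] .
  from te_pos[OF te] obtain i where i: "i < length cs" "col_e j (cs ! i) = Some (cs' ! i)"
    "cs' = cs[i := cs' ! i]" by blast
  have len: "length cs = l" using w by (simp add: wf_def)
  have sv: "sorted_wrt (<) (cs ! i)" and lv: "length (cs ! i) = k" using w i(1) len by (auto simp: wf_def)
  have c': "cs' ! i = em j (cs ! i)"
    using i(2) col_e_iff[OF sv, of j] by (auto split: if_splits)
  have cs': "cs' = cs[i := em j (cs ! i)]" using i(3) c' by simp
  have "\<forall>t<l. (\<forall>q. Suc q < p \<longrightarrow> cs' ! t ! q = Suc q) \<and> cs' ! t ! (p - 1) \<le> Suc j"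
  proof (intro allI impI conjI)
    fix t q assume t: "t < l" and q: "Suc q < p"
    have "cs ! t ! q = Suc q" using cs t q by (simp add: Tset_def)
    then show "cs' ! t ! q = Suc q" using cs' t q p lv len by (cases "t = i") (auto simp: nth_em)
  next
    fix t assume t: "t < l"
    have "cs ! t ! (p - 1) \<le> Suc j" using cs t by (simp add: Tset_def)
    then show "cs' ! t ! (p - 1) \<le> Suc j" using cs' t p lv len by (cases "t = i") (auto simp: nth_em)
  qed
  then show ?thesis using w' by (simp add: Tset_def)
qed

lemma reach_Tset:
  assumes p: "1 \<le> p" "p \<le> k" "p \<le> j" "j \<le> n"
  shows "cs \<in> Tset n k l p (Suc j) \<Longrightarrow> \<exists>cs0 \<in> Tset n k l p j. \<exists>N. opow (tf j) N cs0 = Some cs"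
proof (induction "mu j cs" arbitrary: cs rule: less_induct)
  case less
  show ?case
  proof (cases "cs \<in> Tset n k l p j")
    case True
    then show ?thesis by (intro bexI[of _ cs] exI[of _ 0]) auto
  next
    case False
    have w: "wf n k l cs" using less.prems by (simp add: Tset_def)
    have len: "length cs = l" using w by (simp add: wf_def)
    from False less.prems obtain t where t: "t < l" "\<not> cs ! t ! (p - 1) \<le> j"
      by (auto simp: Tset_def)
    have l0: "0 < l" using t by simp
    have "cs ! t ! (p - 1) \<le> cs ! 0 ! (p - 1)" using wf_row0[OF w t(1), of "p - 1"] p by simp
    moreover have "cs ! 0 ! (p - 1) \<le> Suc j" using less.prems l0 by (simp add: Tset_def)
    ultimately have c0: "cs ! 0 ! (p - 1) = Suc j" using t by simp
    define c where "c = cs ! 0"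
    have sc: "sorted_wrt (<) c" and lc: "length c = k" using w l0 by (auto simp: wf_def c_def)
    have fixed: "\<And>q. Suc q < p \<Longrightarrow> c ! q = Suc q" using less.prems l0 by (simp add: Tset_def c_def)
    have in1: "Suc j \<in> set c" using c0 p lc by (metis c_def diff_less less_le_trans nth_mem zero_less_one)
    have in2: "j \<notin> set c"
    proof
      assume "j \<in> set c"
      then obtain q2 where q2: "q2 < k" "c ! q2 = j" using lc by (auto simp: in_set_conv_nth)
      have "q2 < p - 1" using sorted_nth_mono[OF sc, of q2 "p - 1"] q2 c0 p lc by (simp add: c_def)
      then have "c ! q2 = Suc q2" using fixed by simp
      then show False using q2 \<open>q2 < p - 1\<close> p by simp
    qed
    have "strf (col_e j) c = 1" using strf_col_e[OF sc] in1 in2 by (simp add: eps_def)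
    moreover have "cs = c # drop 1 cs" using l0 len by (simp add: c_def Cons_nth_drop_Suc)
    ultimately have "TE j cs > 0" by (metis tstr_Cons snd_conv add_gr_0 zero_less_one)
    with te_exists[OF wf_colsorted[OF w]] obtain cs1 where te: "te j cs = Some cs1" by blast
    have tf1: "tf j cs1 = Some cs" using te_tf[OF wf_colsorted[OF w] te] by simp
    have cs1: "cs1 \<in> Tset n k l p (Suc j)" using te_Tset[OF less.prems te] p by simp
    have "mu j cs1 < mu j cs" using te_mu[OF wf_colsorted[OF w] te] .
    from less.hyps[OF this cs1] obtain cs0 N where "cs0 \<in> Tset n k l p j" "opow (tf j) N cs0 = Some cs1"
      by blast
    then show ?thesis using tf1 by (intro bexI[of _ cs0] exI[of _ "Suc N"]) auto
  qed
qed

definition shape :: "nat \<Rightarrow> nat \<Rightarrow> nat list list \<Rightarrow> bool" where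
  "shape k l cs = (length cs = l \<and> (\<forall>t<l. length (cs ! t) = k))"

lemma length_tab_cols[simp]: "length (tab_cols k l m) = l"
  by (simp add: tab_cols_def)

lemma tab_cols_nth: "t < l \<Longrightarrow> length (tab_cols k l m ! t) = k"
  "t < l \<Longrightarrow> q < k \<Longrightarrow> tab_cols k l m ! t ! q = m (Suc q) (l - t)"
proof -
  assume t: "t < l"
  have r: "rev [1..<l+1] ! t = l - t" using t by (simp add: rev_nth del: upt_Suc)
  show "length (tab_cols k l m ! t) = k" using t by (simp add: tab_cols_def del: upt_Suc)
  assume q: "q < k"
  show "tab_cols k l m ! t ! q = m (Suc q) (l - t)" using t q r by (simp add: tab_cols_def del: upt_Suc)
qed

lemma shape_tab_cols: "shape k l (tab_cols k l m)"
  by (simp add: shape_def tab_cols_nth)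

lemma tab_cols_cols_tab: "shape k l cs \<Longrightarrow> tab_cols k l (cols_tab k l cs) = cs"
  by (rule nth_equalityI) (auto simp: shape_def tab_cols_nth cols_tab_def intro!: nth_equalityI)

lemma cols_tab_tab_cols: "m \<in> SSYT n k l \<Longrightarrow> cols_tab k l (tab_cols k l m) = m"
  by (rule ext, rule ext) (auto simp: SSYT_def cols_tab_def tab_cols_nth)

lemma cols_tab_nth: "t < l \<Longrightarrow> q < k \<Longrightarrow> cols_tab k l cs (Suc q) (l - t) = cs ! t ! q"
  by (auto simp add: cols_tab_def)

lemma wf_shape: "wf n k l cs \<Longrightarrow> shape k l cs"
  by (simp add: wf_def shape_def)

lemma SSYT_wf: "m \<in> SSYT n k l \<Longrightarrow> wf n k l (tab_cols k l m)"
proof -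
  assume m: "m \<in> SSYT n k l"
  have col: "sorted_wrt (<) (tab_cols k l m ! t)" if t: "t < l" for t
  proof -
    have "\<forall>q. Suc q < k \<longrightarrow> tab_cols k l m ! t ! q < tab_cols k l m ! t ! Suc q"
      using m t by (auto simp: tab_cols_nth SSYT_def)
    then show ?thesis using t by (simp add: sorted_wrt_iff_nth_Suc_transp tab_cols_nth)
  qed
  have rows: "tab_cols k l m ! Suc t ! q \<le> tab_cols k l m ! t ! q" if "Suc t < l" "q < k" for t q
  proof -
    have "m (Suc q) (l - Suc t) \<le> m (Suc q) (l - Suc t + 1)"
      using m that by (simp add: SSYT_def)
    moreover have "l - Suc t + 1 = l - t" using that by simp
    ultimately show ?thesis using that by (simp add: tab_cols_nth)
  qed
  show ?thesis using m col rows by (auto simp: wf_def tab_cols_nth SSYT_def)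
qed

lemma wf_SSYT: "wf n k l cs \<Longrightarrow> cols_tab k l cs \<in> SSYT n k l"
proof -
  assume w: "wf n k l cs"
  have a: "1 \<le> cols_tab k l cs i i' \<and> cols_tab k l cs i i' \<le> n + 1"
    if "1 \<le> i" "i \<le> k" "1 \<le> i'" "i' \<le> l" for i i'
    using w that by (simp add: wf_def cols_tab_def)
  have b: "cols_tab k l cs i i' \<le> cols_tab k l cs i (i' + 1)"
    if "1 \<le> i" "i \<le> k" "1 \<le> i'" "i' < l" for i i'
  proof -
    have "cs ! Suc (l - (i' + 1)) ! (i - 1) \<le> cs ! (l - (i' + 1)) ! (i - 1)"
      using w that by (simp add: wf_def)
    moreover have "Suc (l - (i' + 1)) = l - i'" using that by simp
    ultimately show ?thesis using that by (simp add: cols_tab_def)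
  qed
  have c: "cols_tab k l cs i i' < cols_tab k l cs (i + 1) i'"
    if "1 \<le> i" "i < k" "1 \<le> i'" "i' \<le> l" for i i'
  proof -
    have "sorted_wrt (<) (cs ! (l - i'))" "length (cs ! (l - i')) = k" using w that by (auto simp: wf_def)
    then have "cs ! (l - i') ! (i - 1) < cs ! (l - i') ! i"
      using sorted_wrt_nth_less[of "(<)" "cs ! (l - i')" "i - 1" i] that by simp
    then show ?thesis using that by (simp add: cols_tab_def)
  qed
  show ?thesis using a b c by (simp add: SSYT_def cols_tab_def)
qed

definition U :: "nat \<Rightarrow> nat \<Rightarrow> nat \<Rightarrow> nat \<Rightarrow> nat \<Rightarrow> tableau set" where
  "U n k l p v = {m \<in> SSYT n k l. (\<forall>i i'. 1 \<le> i \<and> i < p \<and> 1 \<le> i' \<and> i' \<le> l \<longrightarrow> m i i' = i)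
      \<and> (\<forall>i'. 1 \<le> i' \<and> i' \<le> l \<longrightarrow> m p i' \<le> v)}"

lemma all_cols: "(\<forall>t<(l::nat). P (l - t)) = (\<forall>i'. 1 \<le> i' \<and> i' \<le> l \<longrightarrow> P i')"
proof
  assume h: "\<forall>t<l. P (l - t)"
  show "\<forall>i'. 1 \<le> i' \<and> i' \<le> l \<longrightarrow> P i'"
  proof (intro allI impI)
    fix i' assume "1 \<le> i' \<and> i' \<le> l"
    then have "l - i' < l" "l - (l - i') = i'" by auto
    then show "P i'" using h by metis
  qed
qed auto

lemma U_iff:
  assumes m: "m \<in> SSYT n k l" and p: "1 \<le> p" "p \<le> k"
  shows "m \<in> U n k l p v \<longleftrightarrow> tab_cols k l m \<in> Tset n k l p v"
proof -
  have "(\<forall>t<l. (\<forall>q. Suc q < p \<longrightarrow> tab_cols k l m ! t ! q = Suc q) \<and> tab_cols k l m ! t ! (p - 1) \<le> v)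
     = (\<forall>t<l. (\<forall>q. Suc q < p \<longrightarrow> m (Suc q) (l - t) = Suc q) \<and> m p (l - t) \<le> v)"
    using p by (auto simp: tab_cols_nth)
  also have "\<dots> = (\<forall>i'. 1 \<le> i' \<and> i' \<le> l \<longrightarrow> (\<forall>q. Suc q < p \<longrightarrow> m (Suc q) i' = Suc q) \<and> m p i' \<le> v)"
    by (rule all_cols)
  also have "\<dots> = ((\<forall>i i'. 1 \<le> i \<and> i < p \<and> 1 \<le> i' \<and> i' \<le> l \<longrightarrow> m i i' = i)
      \<and> (\<forall>i'. 1 \<le> i' \<and> i' \<le> l \<longrightarrow> m p i' \<le> v))"
    by (auto, metis Suc_pred' less_le_trans zero_less_one gr0I not_less_eq Suc_le_lessD) 
  finally show ?thesis using m SSYT_wf[OF m] by (simp add: U_def Tset_def)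
qed

lemma tf_shape: "tf j cs = Some cs' \<Longrightarrow> shape k l cs \<Longrightarrow> shape k l cs'"
proof -
  assume tf: "tf j cs = Some cs'" and sh: "shape k l cs"
  from tf_pos[OF tf] obtain i where i: "i < length cs" "col_f j (cs ! i) = Some (cs' ! i)"
    "cs' = cs[i := cs' ! i]" by blast
  have "cs' ! i = fm j (cs ! i)" using i(2) unfolding col_f_alt by (cases "j \<in> set (cs ! i) \<and> sorted_wrt (<) (fm j (cs ! i))") simp_all
  then have e: "cs' = cs[i := fm j (cs ! i)]" using i(3) by simp
  show ?thesis unfolding e using sh i(1) by (auto simp: shape_def nth_list_update split: if_splits)
qed

lemma opow_tab:
  "shape k l cs \<Longrightarrow> opow (tab_f k l j) N (cols_tab k l cs) = map_option (cols_tab k l) (opow (tf j) N cs)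
     \<and> (\<forall>cs'. opow (tf j) N cs = Some cs' \<longrightarrow> shape k l cs')"
proof (induction N)
  case 0 then show ?case by simp
next
  case (Suc N)
  then show ?case
  proof (cases "opow (tf j) N cs")
    case None
    then show ?thesis using Suc by simp
  next
    case (Some cs'')
    then have sh: "shape k l cs''" using Suc by simp
    have "tab_f k l j (cols_tab k l cs'') = map_option (cols_tab k l) (tf j cs'')"
      by (simp add: tab_f_def tab_cols_cols_tab[OF sh])
    then show ?thesis using Suc Some sh tf_shape[of j cs'' _ k l] by auto
  qed
qed

lemma closure_U:
  assumes p: "1 \<le> p" "p \<le> k" "p \<le> j" "j \<le> n"
  shows "{b'. \<exists>b \<in> U n k l p j. \<exists>N. opow (tab_f k l j) N b = Some b'} = U n k l p (Suc j)"
proof (intro set_eqI iffI)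
  fix b' assume "b' \<in> {b'. \<exists>b \<in> U n k l p j. \<exists>N. opow (tab_f k l j) N b = Some b'}"
  then obtain b N where b: "b \<in> U n k l p j" and o: "opow (tab_f k l j) N b = Some b'" by blast
  have bS: "b \<in> SSYT n k l" using b by (simp add: U_def)
  define cs where "cs = tab_cols k l b"
  have csT: "cs \<in> Tset n k l p j" using U_iff[OF bS p(1,2)] b by (simp add: cs_def)
  have sh: "shape k l cs" by (simp add: cs_def shape_tab_cols)
  have bb: "b = cols_tab k l cs" using cols_tab_tab_cols[OF bS] by (simp add: cs_def)
  from o opow_tab[OF sh, of j N] bb obtain cs' where o': "opow (tf j) N cs = Some cs'" and b': "b' = cols_tab k l cs'"
    by auto
  have cs'T: "cs' \<in> Tset n k l p (Suc j)" using opow_tf_Tset[OF csT o' p] .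
  have w': "wf n k l cs'" using cs'T by (simp add: Tset_def)
  have S': "b' \<in> SSYT n k l" using wf_SSYT[OF w'] b' by simp
  show "b' \<in> U n k l p (Suc j)"
    using U_iff[OF S' p(1,2)] cs'T b' tab_cols_cols_tab[OF wf_shape[OF w']] by simp
next
  fix m assume m: "m \<in> U n k l p (Suc j)"
  have mS: "m \<in> SSYT n k l" using m by (simp add: U_def)
  have "tab_cols k l m \<in> Tset n k l p (Suc j)" using U_iff[OF mS p(1,2)] m by simp
  from reach_Tset[OF p this] obtain cs0 N where cs0: "cs0 \<in> Tset n k l p j"
    and o: "opow (tf j) N cs0 = Some (tab_cols k l m)" by blast
  have w0: "wf n k l cs0" using cs0 by (simp add: Tset_def)
  have S0: "cols_tab k l cs0 \<in> SSYT n k l" using wf_SSYT[OF w0] .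
  have U0: "cols_tab k l cs0 \<in> U n k l p j"
    using U_iff[OF S0 p(1,2)] cs0 tab_cols_cols_tab[OF wf_shape[OF w0]] by simp
  have "opow (tab_f k l j) N (cols_tab k l cs0) = Some m"
    using opow_tab[OF wf_shape[OF w0], of j N] o cols_tab_tab_cols[OF mS] by simp
  then show "m \<in> {b'. \<exists>b \<in> U n k l p j. \<exists>N. opow (tab_f k l j) N b = Some b'}" using U0 by blast
qed

lemma tf_rep_None:
  assumes "strf (col_f j) c' = 0"
  shows "tf j (replicate s c') = None"
  using assms by (induction s) auto

lemma tf_rep:
  assumes "strf (col_f j) c' = 0" "strf (col_f j) c = 1" "strf (col_e j) c = 0" "col_f j c = Some c'"
  shows "tf j (replicate s c' @ replicate (Suc t) c) = Some (replicate (Suc s) c' @ replicate t c)"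
proof (induction s)
  case 0
  have "tstr j (replicate t c) = (t, 0)" using assms by (induction t) (auto simp: tstr_Cons)
  then show ?case using assms by simp
next
  case (Suc s)
  then show ?case using assms by simp
qed

lemma opow_rep:
  assumes "strf (col_f j) c' = 0" "strf (col_f j) c = 1" "strf (col_e j) c = 0" "col_f j c = Some c'"
  shows "s \<le> l \<Longrightarrow> opow (tf j) s (replicate l c) = Some (replicate s c' @ replicate (l - s) c)"
proof (induction s)
  case 0 then show ?case by simp
next
  case (Suc s)
  then have e: "l - s = Suc (l - Suc s)" by simp
  show ?case using Suc tf_rep[OF assms, of s "l - Suc s"] e by simp
qed

lemma opow_rep_end:
  assumes "strf (col_f j) c' = 0" "strf (col_f j) c = 1" "strf (col_e j) c = 0" "col_f j c = Some c'"
  shows "opow (tf j) (Suc l) (replicate l c) = None"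
  using opow_rep[OF assms, of l l] tf_rep_None[OF assms(1), of l] by simp

definition colv :: "nat \<Rightarrow> nat \<Rightarrow> nat \<Rightarrow> nat \<Rightarrow> nat list" where
  "colv n k p v = map (\<lambda>q. if Suc q < p then Suc q else if Suc q = p then v else Suc q + (n + 1 - k)) [0..<k]"

definition beta :: "nat \<Rightarrow> nat \<Rightarrow> nat \<Rightarrow> nat \<Rightarrow> nat \<Rightarrow> tableau" where
  "beta n k l p v = (\<lambda>i i'. if 1 \<le> i \<and> i \<le> k \<and> 1 \<le> i' \<and> i' \<le> l then
        (if i < p then i else if i = p then v else i + (n + 1 - k)) else 0)"

lemma beta_cols: "beta n k l p v = cols_tab k l (replicate l (colv n k p v))"
  by (rule ext, rule ext) (auto simp: beta_def cols_tab_def colv_def)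

lemma colv_sorted:
  assumes "p \<le> v" "v \<le> p + (n + 1 - k)" "1 \<le> p"
  shows "sorted_wrt (<) (colv n k p v)"
  unfolding sorted_wrt_iff_nth_Suc_transp[OF transp_on_less]
  using assms by (auto simp: colv_def)

lemma colv_fm:
  assumes "1 \<le> p" "p \<le> k" "p \<le> j" "j < p + (n + 1 - k)"
  shows "fm j (colv n k p j) = colv n k p (Suc j)" "j \<in> set (colv n k p j)"
proof -
  have "colv n k p j ! (p - 1) = j" "p - 1 < length (colv n k p j)" using assms by (auto simp: colv_def)
  then show "j \<in> set (colv n k p j)" by (metis nth_mem)
  show "fm j (colv n k p j) = colv n k p (Suc j)"
    using assms by (auto simp: fm_def colv_def)
qed

lemma bseq_step:
  assumes p: "1 \<le> p" "p \<le> k" "p \<le> j" "j < p + (n + 1 - k)"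
  shows "strf (tab_f k l j) (beta n k l p j) = l"
    "the (opow (tab_f k l j) l (beta n k l p j)) = beta n k l p (Suc j)"
proof -
  define c where "c = colv n k p j"
  define c' where "c' = colv n k p (Suc j)"
  have sc: "sorted_wrt (<) c" using colv_sorted[of p j n k] p by (simp add: c_def)
  have sc': "sorted_wrt (<) c'" using colv_sorted[of p "Suc j" n k] p by (simp add: c'_def)
  have jc: "j \<in> set c" using colv_fm p by (simp add: c_def)
  have jc': "Suc j \<notin> set c" using p by (auto simp: c_def colv_def)
  have j'c: "j \<notin> set c'" using p by (auto simp: c'_def colv_def)
  have fmc: "fm j c = c'" using colv_fm p by (simp add: c_def c'_def)
  have a1: "strf (col_f j) c' = 0" using strf_col_f[OF sc'] j'c by (simp add: phi_def)
  have a2: "strf (col_f j) c = 1" using strf_col_f[OF sc] jc jc' by (simp add: phi_def)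
  have a3: "strf (col_e j) c = 0" using strf_col_e[OF sc] jc by (simp add: eps_def)
  have a4: "col_f j c = Some c'" using col_f_iff[OF sc, of j] jc jc' fmc by simp
  have sh: "shape k l (replicate l c)" by (simp add: shape_def c_def colv_def)
  have o1: "opow (tab_f k l j) l (beta n k l p j) = Some (cols_tab k l (replicate l c'))"
    using opow_tab[OF sh, of j l] opow_rep[OF a1 a2 a3 a4, of l l] by (simp add: beta_cols c_def)
  have o2: "opow (tab_f k l j) (Suc l) (beta n k l p j) = None"
    using opow_tab[OF sh, of j "Suc l"] opow_rep_end[OF a1 a2 a3 a4, of l] by (simp add: beta_cols c_def)
  show "strf (tab_f k l j) (beta n k l p j) = l" using strf_eq o1 o2 by (metis option.distinct(1))
  show "the (opow (tab_f k l j) l (beta n k l p j)) = beta n k l p (Suc j)"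
    using o1 by (simp add: beta_cols c'_def)
qed

lemma SSYT_lower:
  assumes m: "m \<in> SSYT n k l" and i': "1 \<le> i'" "i' \<le> l"
  shows "1 \<le> i \<Longrightarrow> i \<le> k \<Longrightarrow> i \<le> m i i'"
proof (induction i rule: nat_induct_at_least)
  case base then show ?case using m i' by (simp add: SSYT_def)
next
  case (Suc i)
  then have "m i i' < m (i + 1) i'" using m i' by (simp add: SSYT_def)
  with Suc show ?case by simp
qed

lemma SSYT_upper:
  assumes m: "m \<in> SSYT n k l" and i': "1 \<le> i'" "i' \<le> l" and kn: "k \<le> n + 1"
  shows "1 \<le> i \<Longrightarrow> i \<le> k \<Longrightarrow> m i i' \<le> i + (n + 1 - k)"
proof (induction "k - i" arbitrary: i)
  case 0
  then have "i = k" by simp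
  then show ?case using m i' kn 0 by (auto simp: SSYT_def)
next
  case (Suc d)
  then have "m i i' < m (i + 1) i'" using m i' by (simp add: SSYT_def)
  moreover have "m (i + 1) i' \<le> i + 1 + (n + 1 - k)" using Suc.hyps(1)[of "i + 1"] Suc.hyps(2) by simp
  ultimately show ?case by simp
qed

lemma bbar_SSYT: "1 \<le> k \<Longrightarrow> k \<le> n + 1 \<Longrightarrow> bbar k l \<in> SSYT n k l"
  by (auto simp: SSYT_def bbar_def)

lemma U_base:
  assumes "1 \<le> k" "k \<le> n + 1"
  shows "U n k l k k = {bbar k l}"
proof (intro set_eqI iffI)
  fix m assume m: "m \<in> U n k l k k"
  have mS: "m \<in> SSYT n k l" using m by (simp add: U_def)
  show "m \<in> {bbar k l}"
  proof -
    have "m i i' = bbar k l i i'" for i i'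
    proof (cases "1 \<le> i \<and> i \<le> k \<and> 1 \<le> i' \<and> i' \<le> l")
      case True
      show ?thesis
      proof (cases "i < k")
        case True
        then show ?thesis using m \<open>1 \<le> i \<and> i \<le> k \<and> 1 \<le> i' \<and> i' \<le> l\<close> by (simp add: U_def bbar_def)
      next
        case False
        then have "i = k" using True by simp
        then have "k \<le> m i i'" "m i i' \<le> k" using SSYT_lower[OF mS, of i' i] m True by (auto simp: U_def)
        then show ?thesis using True \<open>i = k\<close> by (simp add: bbar_def)
      qed
    next
      case False
      then show ?thesis using mS by (simp add: SSYT_def bbar_def)
    qed
    then show ?thesis by (auto intro!: ext)
  qed
next
  fix m assume "m \<in> {bbar k l}"
  then show "m \<in> U n k l k k" using bbar_SSYT[OF assms] by (auto simp: U_def bbar_def)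
qed

lemma U_shift:
  assumes P: "2 \<le> P" "P \<le> k" and kn: "k \<le> n + 1"
  shows "U n k l (P - 1) (P - 1) = U n k l P (P + (n + 1 - k))"
proof (intro set_eqI iffI)
  fix m assume m: "m \<in> U n k l (P - 1) (P - 1)"
  have mS: "m \<in> SSYT n k l" using m by (simp add: U_def)
  have row: "m (P - 1) i' = P - 1" if "1 \<le> i'" "i' \<le> l" for i'
    using SSYT_lower[OF mS that, of "P - 1"] m that P by (force simp: U_def)
  have "m i i' = i" if "1 \<le> i" "i < P" "1 \<le> i'" "i' \<le> l" for i i'
  proof (cases "i < P - 1")
    case True then show ?thesis using m that by (simp add: U_def)
  next
    case False then have "i = P - 1" using that by simp
    then show ?thesis using row that by simp
  qed
  moreover have "m P i' \<le> P + (n + 1 - k)" if "1 \<le> i'" "i' \<le> l" for i'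
    using SSYT_upper[OF mS that kn, of P] P by simp
  ultimately show "m \<in> U n k l P (P + (n + 1 - k))" using mS by (simp add: U_def)
next
  fix m assume m: "m \<in> U n k l P (P + (n + 1 - k))"
  then show "m \<in> U n k l (P - 1) (P - 1)" using P by (auto simp: U_def)
qed

lemma beta_shift:
  assumes "2 \<le> P"
  shows "beta n k l (P - 1) (P - 1) = beta n k l P (P + (n + 1 - k))"
  using assms by (intro ext) (auto simp: beta_def)

lemma beta_base: "beta n k l k k = bbar k l"
  by (intro ext) (auto simp: beta_def bbar_def)

abbreviation pp :: "nat \<Rightarrow> nat \<Rightarrow> nat \<Rightarrow> nat" where
  "pp n k a \<equiv> k - (a - 1) div (n + 1 - k)"

lemma idx_pp: "idx n k a = pp n k a + (a - 1) mod (n + 1 - k)"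
  by (simp add: idx_def)

lemma main_ind:
  assumes n: "1 \<le> k" "k \<le> n"
  shows "1 \<le> a \<Longrightarrow> a \<le> k * (n + 1 - k) \<Longrightarrow>
    Bset n k l a = U n k l (pp n k a) (Suc (idx n k a)) \<and> bseq n k l a = beta n k l (pp n k a) (Suc (idx n k a))"
proof (induction a)
  case 0 then show ?case by simp
next
  case (Suc a)
  define k' where "k' = n + 1 - k"
  have k'0: "0 < k'" using n by (simp add: k'_def)
  define P where "P = pp n k (Suc a)"
  define J where "J = idx n k (Suc a)"
  have ad: "a < k * k'" using Suc.prems by (simp add: k'_def)
  have gk: "a div k' < k" using ad by (simp add: less_mult_imp_div_less mult.commute)
  have rk: "a mod k' < k'" using k'0 by simp
  have P1: "1 \<le> P" "P \<le> k" using gk by (auto simp: P_def k'_def)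
  have JP: "J = P + a mod k'" by (simp add: J_def P_def idx_pp k'_def)
  have PJ: "P \<le> J" "J \<le> n" "J < P + k'" using JP P1 rk n unfolding k'_def by linarith+
  have prev: "Bset n k l a = U n k l P J \<and> bseq n k l a = beta n k l P J"
  proof (cases "a = 0")
    case True
    then have "P = k" "J = k" by (simp_all add: P_def J_def idx_def)
    then show ?thesis using True U_base[of k n l] beta_base[of n k l] n by simp
  next
    case False
    then obtain x where x: "a = Suc x" by (cases a) auto
    have ih: "Bset n k l a = U n k l (pp n k a) (Suc (idx n k a)) \<and> bseq n k l a = beta n k l (pp n k a) (Suc (idx n k a))"
      using Suc.IH Suc.prems x by simp
    show ?thesis
    proof (cases "Suc (x mod k') = k'")
      case False
      then have "a div k' = x div k'" "a mod k' = Suc (x mod k')"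
        using x by (simp_all add: div_Suc mod_Suc)
      then have "pp n k a = P" "Suc (idx n k a) = J"
        using x gk by (simp_all add: P_def JP idx_pp k'_def)
      then show ?thesis using ih by simp
    next
      case True
      then have e: "a div k' = Suc (x div k')" "a mod k' = 0"
        using x by (simp_all add: div_Suc mod_Suc)
      define P' where "P' = pp n k a"
      have P'P: "P = P' - 1" "2 \<le> P'" "P' \<le> k" using e x gk by (auto simp: P_def P'_def k'_def)
      have JJ: "J = P' - 1" using JP e P'P by simp
      have "Suc (idx n k a) = P' + k'" using x True by (simp add: idx_pp P'_def k'_def)
      then show ?thesis using ih U_shift[OF P'P(2,3), of n l] beta_shift[OF P'P(2), of n k l] n P'P JJ
        by (simp add: P'_def k'_def)
    qed
  qed
  have cl: "Bset n k l (Suc a) = U n k l P (Suc J)"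
    using closure_U[OF P1 PJ(1,2), of l] prev by (simp add: J_def)
  have bs: "bseq n k l (Suc a) = beta n k l P (Suc J)"
    using bseq_step[OF P1 PJ(1), of n l] PJ(3) prev by (simp add: J_def Let_def k'_def)
  show ?case using cl bs by (simp add: P_def J_def)
qed

theorem mainTheorem3:
  fixes n k l a :: nat
  assumes "1 \<le> n" and "1 \<le> k" and "k \<le> n" and "1 \<le> l"
    and "1 \<le> a" and "a \<le> k * (n + 1 - k)"
  shows "let k' = n + 1 - k; g = (a - 1) div k'; r = (a - 1) - k' * g in
     Bset n k l a = {m \<in> SSYT n k l.
        (\<forall>i i'. 1 \<le> i \<and> i < k - g \<and> 1 \<le> i' \<and> i' \<le> l \<longrightarrow> m i i' = i)
      \<and> (\<forall>i'. 1 \<le> i' \<and> i' \<le> l \<longrightarrow> m (k - g) i' \<le> k - g + r + 1)}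
   \<and> bseq n k l a = (\<lambda>i i'. if 1 \<le> i \<and> i \<le> k \<and> 1 \<le> i' \<and> i' \<le> l then
        (if i < k - g then i else if i = k - g then k - g + r + 1 else i + k') else 0)"
proof -
  have m: "Bset n k l a = U n k l (pp n k a) (Suc (idx n k a)) \<and> bseq n k l a = beta n k l (pp n k a) (Suc (idx n k a))"
    using main_ind[OF assms(2,3) assms(5,6)] .
  have r: "(a - 1) - (n + 1 - k) * ((a - 1) div (n + 1 - k)) = (a - 1) mod (n + 1 - k)"
    by (metis minus_div_mult_eq_mod mult.commute)
  have m2: "Bset n k l a = U n k l (k - (a - 1) div (n + 1 - k)) (k - (a - 1) div (n + 1 - k) + (a - 1) mod (n + 1 - k) + 1)
     \<and> bseq n k l a = beta n k l (k - (a - 1) div (n + 1 - k)) (k - (a - 1) div (n + 1 - k) + (a - 1) mod (n + 1 - k) + 1)"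
    using m by (simp only: idx_pp Suc_eq_plus1)
  show ?thesis unfolding Let_def r using m2 by (simp only: U_def beta_def)

qed

end
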